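(* Let $m,n\ge1$, $\mathcal{H}=\mathbb{R}^{m\times n}$ with $\langle\mathbf{A},\mathbf{B}\rangle_{\mathcal{H}}=\mathbf{A}^\intercal\mathbf{B}$, and let $\mathbf{V}\in\mathbb{R}^{n\times n}$ be a nonzero symmetric matrix such that $\langle\langle\mathbf{X},\mathbf{X}\rangle_{\mathcal{H}},\mathbf{V}/\|\mathbf{V}\|\rangle\ge0$ for all $\mathbf{X}\in\mathcal{H}$; set $\|\mathbf{X}\|_{\mathcal{H}}(\mathbf{V})=\big(\langle\langle\mathbf{X},\mathbf{X}\rangle_{\mathcal{H}},\mathbf{V}/\|\mathbf{V}\|\rangle\big)^{1/2}$. Let $\mathcal{S}=(\mathbf{X}_1,\dots,\mathbf{X}_N)$ be a finite sequence of matrices in $\mathcal{H}$ and define $$\mathcal{H}\circ\mathcal{S}=\Big\{\Big(\big\langle\langle\mathbf{W},\mathbf{X}_1\rangle_{\mathcal{H}},\tfrac{\mathbf{V}}{\|\mathbf{V}\|}\big\rangle,\dots,\big\langle\langle\mathbf{W},\mathbf{X}_N\rangle_{\mathcal{H}},\tfrac{\mathbf{V}}{\|\mathbf{V}\|}\big\rangle\Big):\ \|\mathbf{W}\|_{\mathcal{H}}(\mathbf{V})\le1\Big\}\subseteq\mathbb{R}^N.$$ Then $R(\mathcal{H}\circ\mathcal{S})\le\dfrac{\max_i\|\mathbf{X}_i\|_{\mathcal{H}}(\mathbf{V})}{\sqrt N}$.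
   Context: $\langle\cdot,\cdot\rangle$ is the Frobenius inner product and $\|\cdot\|$ the Frobenius norm. For $\mathcal{A}\subseteq\mathbb{R}^N$, the Rademacher complexity is $R(\mathcal{A})=\frac1N\mathbb{E}_{\bm\sigma}\big[\sup_{\mathbf{a}\in\mathcal{A}}\sum_{i=1}^N\sigma_ia_i\big]$, where $\sigma_1,\dots,\sigma_N$ are i.i.d. uniform on $\{\pm1\}$. *)

theory Defs
  imports "HOL-Analysis.Analysis"
begin

text \<open>Matrices are rendered as real^'n^'m (m x n). The Frobenius inner product of
  two matrices is the library inner product on real^'n^'n (sum of entrywise
  products), and the Frobenius norm is the library norm.\<close>

definition hinner :: "real^'n^'m \<Rightarrow> real^'n^'m \<Rightarrow> real^'n^'n" where
  "hinner A B = transpose A ** B"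

definition vpair :: "real^'n^'n \<Rightarrow> real^'n^'m \<Rightarrow> real^'n^'m \<Rightarrow> real" where
  "vpair V A B = hinner A B \<bullet> ((1 / norm V) *\<^sub>R V)"

definition hnorm :: "real^'n^'n \<Rightarrow> real^'n^'m \<Rightarrow> real" where
  "hnorm V X = sqrt (vpair V X X)"

text \<open>Rademacher complexity of A (vectors in R^N represented as nat => real, only
  indices < N matter): (1/N) E_sigma sup_{a in A} sum_i sigma_i a_i, with sigma
  uniform on {-1,1}^N, so the expectation is the average over all 2^N sign vectors.\<close>
definition rademacher :: "nat \<Rightarrow> (nat \<Rightarrow> real) set \<Rightarrow> real" where
  "rademacher N A =
     (1 / real N) * ((\<Sum>\<sigma>\<in>({..<N} \<rightarrow>\<^sub>E {-1, 1}). Sup ((\<lambda>a. \<Sum>i<N. \<sigma> i * a i) ` A)) / 2 ^ N)"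

end

theory Submission
  imports Defs
begin

lemma hinner_add_left: "hinner (A + B) C = hinner A C + hinner B C"
  by (simp add: hinner_def matrix_matrix_mult_def transpose_def vec_eq_iff sum.distrib algebra_simps)
lemma hinner_add_right: "hinner C (A + B) = hinner C A + hinner C B"
  by (simp add: hinner_def matrix_add_ldistrib)
lemma hinner_scale_left: "hinner (c *\<^sub>R A) C = c *\<^sub>R hinner A C"
  by (simp add: hinner_def matrix_matrix_mult_def transpose_def vec_eq_iff sum_distrib_left algebra_simps)
lemma hinner_scale_right: "hinner C (c *\<^sub>R A) = c *\<^sub>R hinner C A"
  by (simp add: hinner_def matrix_matrix_mult_def transpose_def vec_eq_iff sum_distrib_left algebra_simps)
lemma hinner_swap: "hinner B A = transpose (hinner A B)"
  by (simp add: hinner_def matrix_transpose_mul)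
lemma inner_transpose: "transpose (M::real^'n^'n) \<bullet> V = M \<bullet> transpose V"
  unfolding inner_vec_def transpose_def
  by (simp, subst sum.swap, simp add: mult.commute)

lemma vpair_add_left: "vpair V (A + B) C = vpair V A C + vpair V B C"
  by (simp add: vpair_def hinner_add_left inner_add_left add_divide_distrib)
lemma vpair_add_right: "vpair V C (A + B) = vpair V C A + vpair V C B"
  by (simp add: vpair_def hinner_add_right inner_add_left add_divide_distrib)
lemma vpair_scale_left: "vpair V (c *\<^sub>R A) C = c * vpair V A C"
  by (simp add: vpair_def hinner_scale_left)
lemma vpair_scale_right: "vpair V C (c *\<^sub>R A) = c * vpair V C A"
  by (simp add: vpair_def hinner_scale_right)
lemma vpair_sym: "transpose V = V \<Longrightarrow> vpair V B A = vpair V A B"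
  unfolding vpair_def hinner_swap[of B A] inner_transpose transpose_scalar by simp
lemma vpair_diff_left: "vpair V (A - B) C = vpair V A C - vpair V B C"
  using vpair_add_left[of V A "-B" C] vpair_scale_left[of V "-1" B C] by simp
lemma vpair_diff_right: "vpair V C (A - B) = vpair V C A - vpair V C B"
  using vpair_add_right[of V C A "-B"] vpair_scale_right[of V C "-1" B] by simp
lemma vpair_zero_right: "vpair V C 0 = 0"
  using vpair_scale_right[of V C 0 0] by simp
lemma vpair_sum_right: "finite I \<Longrightarrow> vpair V W (\<Sum>i\<in>I. f i) = (\<Sum>i\<in>I. vpair V W (f i))"
  by (induction I rule: finite_induct) (simp_all add: vpair_zero_right vpair_add_right)
lemma vpair_sum_left: "transpose V = V \<Longrightarrow> finite I \<Longrightarrow> vpair V (\<Sum>i\<in>I. f i) W = (\<Sum>i\<in>I. vpair V (f i) W)"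
  using vpair_sum_right[of I V W f] by (simp add: vpair_sym)

lemma cs_bound:
  fixes V :: "real^'n^'n" and W S :: "real^'n^'m"
  assumes sym: "transpose V = V" and psd: "\<forall>Y :: real^'n^'m. vpair V Y Y \<ge> 0"
    and W1: "vpair V W W \<le> 1"
  shows "vpair V W S \<le> sqrt (vpair V S S)"
proof -
  define a where "a = vpair V W W"
  define b where "b = vpair V W S"
  define c where "c = vpair V S S"
  have c0: "c \<ge> 0" using psd c_def by auto
  have a0: "a \<ge> 0" using psd a_def by auto
  have key: "2 * l * b \<le> l^2 + c" if "l > 0" for l
  proof -
    have "0 \<le> vpair V (l *\<^sub>R W - S) (l *\<^sub>R W - S)" using psd by auto
    also have "\<dots> = l^2 * a - 2 * l * b + c"
      unfolding a_def b_def c_def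
      by (simp add: vpair_diff_left vpair_diff_right vpair_scale_left vpair_scale_right
          vpair_sym[OF sym, of S W] power2_eq_square algebra_simps)
    finally have "2 * l * b \<le> l^2 * a + c" by simp
    also have "l^2 * a \<le> l^2" using W1 a_def by (simp add: mult_left_le)
    finally show ?thesis by simp
  qed
  show ?thesis
  proof (cases "c > 0")
    case True
    have "2 * sqrt c * b \<le> (sqrt c)^2 + c" using key[of "sqrt c"] True by simp
    hence "2 * sqrt c * b \<le> 2 * sqrt c * sqrt c" using c0 by simp
    hence "b \<le> sqrt c" using True by (simp add: mult_le_cancel_left)
    thus ?thesis by (simp add: b_def c_def)
  next
    case False
    hence c00: "c = 0" using c0 by simp
    show ?thesis
    proof (rule ccontr)
      assume "\<not> ?thesis"
      hence bp: "b > 0" using c00 by (simp add: b_def c_def)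
      have "2 * b * b \<le> b^2" using key[of b] bp c00 by simp
      thus False using bp by (simp add: power2_eq_square)
    qed
  qed
qed

lemma sign_sum_off:
  fixes i j N :: nat
  assumes "i < N" "j < N" "i \<noteq> j"
  shows "(\<Sum>\<sigma>\<in>({..<N} \<rightarrow>\<^sub>E {-1, 1::real}). \<sigma> i * \<sigma> j) = 0"
proof -
  define P where "P = ({..<N} \<rightarrow>\<^sub>E {-1, 1::real})"
  define fl where "fl = (\<lambda>\<sigma>::nat\<Rightarrow>real. \<sigma>(i := - \<sigma> i))"
  have inP: "fl \<sigma> \<in> P" if "\<sigma> \<in> P" for \<sigma>
    using that assms unfolding P_def fl_def by (auto simp: PiE_def Pi_def extensional_def)
  have inv: "fl (fl \<sigma>) = \<sigma>" for \<sigma> unfolding fl_def by auto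
  have h: "fl \<sigma> i * fl \<sigma> j = - (\<sigma> i * \<sigma> j)" for \<sigma> unfolding fl_def using assms by auto
  have "(\<Sum>\<sigma>\<in>P. \<sigma> i * \<sigma> j) = (\<Sum>\<sigma>\<in>P. - (\<sigma> i * \<sigma> j))"
    using inP inv h by (intro sum.reindex_bij_witness[of P fl fl]) auto
  also have "\<dots> = - (\<Sum>\<sigma>\<in>P. \<sigma> i * \<sigma> j)" by (simp add: sum_negf)
  finally show ?thesis unfolding P_def by simp
qed

lemma card_P: "card ({..<N} \<rightarrow>\<^sub>E {-1, 1::real}) = 2 ^ N"
  by (simp add: card_PiE numeral_2_eq_2)

lemma sign_sum_diag:
  assumes "i < N"
  shows "(\<Sum>\<sigma>\<in>({..<N} \<rightarrow>\<^sub>E {-1, 1::real}). \<sigma> i * \<sigma> i) = 2 ^ N"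
proof -
  have "(\<Sum>\<sigma>\<in>({..<N} \<rightarrow>\<^sub>E {-1, 1::real}). \<sigma> i * \<sigma> i) = (\<Sum>\<sigma>\<in>({..<N} \<rightarrow>\<^sub>E {-1, 1::real}). 1)"
    using assms by (intro sum.cong) (auto simp: PiE_def Pi_def)
  thus ?thesis using card_P[of N] by simp
qed

lemma sign_sum:
  assumes "i < N" "j < N"
  shows "(\<Sum>\<sigma>\<in>({..<N} \<rightarrow>\<^sub>E {-1, 1::real}). \<sigma> i * \<sigma> j) = (if i = j then 2 ^ N else 0)"
  using sign_sum_off[OF assms] sign_sum_diag[OF assms(1)] by auto

theorem lemma3:
  fixes V :: "real^'n^'n" and X :: "nat \<Rightarrow> real^'n^'m" and N :: nat
  assumes "N \<ge> 1"
    and "V \<noteq> 0"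
    and "transpose V = V"
    and "\<forall>Y :: real^'n^'m. vpair V Y Y \<ge> 0"
  shows "rademacher N {(\<lambda>i. vpair V W (X i)) | W. hnorm V W \<le> 1}
           \<le> (MAX i\<in>{..<N}. hnorm V (X i)) / sqrt (real N)"
proof -
  note sym = assms(3) and psd = assms(4)
  define P where "P = ({..<N} \<rightarrow>\<^sub>E {-1, 1::real})"
  define Set where "Set = {(\<lambda>i. vpair V W (X i)) | W. hnorm V W \<le> 1}"
  define S where "S = (\<lambda>\<sigma>::nat\<Rightarrow>real. (\<Sum>i<N. \<sigma> i *\<^sub>R X i))"
  define q where "q = (\<lambda>\<sigma>. vpair V (S \<sigma>) (S \<sigma>))"
  define M where "M = (MAX i\<in>{..<N}. hnorm V (X i))"
  have finP: "finite P" unfolding P_def by (simp add: finite_PiE)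
  have cardP: "card P = 2 ^ N" unfolding P_def by (rule card_P)
  have q0: "q \<sigma> \<ge> 0" for \<sigma> using psd q_def by auto
  have step1: "Sup ((\<lambda>a. \<Sum>i<N. \<sigma> i * a i) ` Set) \<le> sqrt (q \<sigma>)" for \<sigma>
  proof (rule cSup_least)
    have "(\<lambda>i. vpair V 0 (X i)) \<in> Set"
      unfolding Set_def hnorm_def by (auto simp: vpair_zero_right vpair_sym[OF sym, of _ 0])
    thus "(\<lambda>a. \<Sum>i<N. \<sigma> i * a i) ` Set \<noteq> {}" by blast
  next
    fix x assume "x \<in> (\<lambda>a. \<Sum>i<N. \<sigma> i * a i) ` Set"
    then obtain W where W: "hnorm V W \<le> 1" and x: "x = (\<Sum>i<N. \<sigma> i * vpair V W (X i))"
      unfolding Set_def by auto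
    have "x = vpair V W (S \<sigma>)" unfolding x S_def
      by (simp add: vpair_sum_right vpair_scale_right)
    also have "\<dots> \<le> sqrt (q \<sigma>)" unfolding q_def
      by (rule cs_bound[OF sym psd]) (use W in \<open>simp add: hnorm_def\<close>)
    finally show "x \<le> sqrt (q \<sigma>)" .
  qed
  have step2: "q \<sigma> = (\<Sum>i<N. \<Sum>j<N. \<sigma> i * \<sigma> j * vpair V (X i) (X j))" for \<sigma>
    unfolding q_def S_def
    by (simp add: vpair_sum_left[OF sym] vpair_sum_right vpair_scale_left vpair_scale_right
        sum_distrib_left mult.assoc) (subst sum.swap, simp add: ac_simps)
  have step3: "(\<Sum>\<sigma>\<in>P. q \<sigma>) = 2 ^ N * (\<Sum>i<N. vpair V (X i) (X i))"
  proof -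
    have "(\<Sum>\<sigma>\<in>P. q \<sigma>) = (\<Sum>i<N. \<Sum>j<N. vpair V (X i) (X j) * (\<Sum>\<sigma>\<in>P. \<sigma> i * \<sigma> j))"
      unfolding step2
      by (subst sum.swap, rule sum.cong, simp, subst sum.swap, rule sum.cong, simp)
         (simp add: sum_distrib_left mult.commute)
    also have "\<dots> = (\<Sum>i<N. \<Sum>j<N. vpair V (X i) (X j) * (if i = j then 2 ^ N else 0))"
      unfolding P_def by (intro sum.cong refl) (simp add: sign_sum)
    also have "\<dots> = 2 ^ N * (\<Sum>i<N. vpair V (X i) (X i))"
      by (simp add: sum_distrib_left mult.commute if_distrib cong: if_cong)
    finally show ?thesis .
  qed
  have hn0: "hnorm V (Y::real^'n^'m) \<ge> 0" for Y unfolding hnorm_def using psd by simp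
  have M0: "M \<ge> 0"
  proof -
    have "hnorm V (X 0) \<le> M" unfolding M_def using assms(1) by (intro Max_ge) auto
    thus ?thesis using hn0[of "X 0"] by linarith
  qed
  have step4: "(\<Sum>i<N. vpair V (X i) (X i)) \<le> real N * M^2"
  proof -
    have "vpair V (X i) (X i) \<le> M^2" if "i < N" for i
    proof -
      have "hnorm V (X i) \<le> M" unfolding M_def using that by (intro Max_ge) auto
      hence "(hnorm V (X i))^2 \<le> M^2" using hn0 by (intro power_mono) auto
      thus ?thesis using psd by (simp add: hnorm_def)
    qed
    hence "(\<Sum>i<N. vpair V (X i) (X i)) \<le> (\<Sum>i<N. M^2)" by (intro sum_mono) auto
    thus ?thesis by simp
  qed
  have step5: "(\<Sum>\<sigma>\<in>P. sqrt (q \<sigma>)) \<le> sqrt ((\<Sum>\<sigma>\<in>P. q \<sigma>) * 2 ^ N)"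
  proof (rule real_le_rsqrt)
    have "(\<Sum>\<sigma>\<in>P. sqrt (q \<sigma>))^2 \<le> (\<Sum>\<sigma>\<in>P. (sqrt (q \<sigma>))^2) * card P"
      by (rule sum_squared_le_sum_of_squares)
    thus "(\<Sum>\<sigma>\<in>P. sqrt (q \<sigma>))^2 \<le> (\<Sum>\<sigma>\<in>P. q \<sigma>) * 2 ^ N"
      using q0 cardP by simp
  qed
  have "(\<Sum>\<sigma>\<in>P. Sup ((\<lambda>a. \<Sum>i<N. \<sigma> i * a i) ` Set)) \<le> (\<Sum>\<sigma>\<in>P. sqrt (q \<sigma>))"
    by (intro sum_mono step1)
  also have "\<dots> \<le> sqrt ((2 ^ N * (real N * M^2)) * 2 ^ N)"
  proof -
    have "sum q P * 2 ^ N \<le> (2 ^ N * (real N * M^2)) * 2 ^ N"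
      unfolding step3 using step4 by (intro mult_right_mono mult_left_mono) auto
    hence "sqrt (sum q P * 2 ^ N) \<le> sqrt ((2 ^ N * (real N * M^2)) * 2 ^ N)"
      by (simp only: real_sqrt_le_iff)
    thus ?thesis using step5 by linarith
  qed
  also have "\<dots> = 2 ^ N * (sqrt (real N) * M)"
    using M0 by (simp add: real_sqrt_mult power2_eq_square)
  finally have A: "(\<Sum>\<sigma>\<in>P. Sup ((\<lambda>a. \<Sum>i<N. \<sigma> i * a i) ` Set)) \<le> 2 ^ N * (sqrt (real N) * M)" .
  have "rademacher N Set = (1 / real N) * ((\<Sum>\<sigma>\<in>P. Sup ((\<lambda>a. \<Sum>i<N. \<sigma> i * a i) ` Set)) / 2 ^ N)"
    unfolding rademacher_def P_def by simp
  also have "\<dots> \<le> (1 / real N) * ((2 ^ N * (sqrt (real N) * M)) / 2 ^ N)"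
    using A assms(1) by (intro mult_left_mono divide_right_mono) auto
  also have "\<dots> = M / sqrt (real N)"
    using assms(1) by (simp add: field_simps)
  finally show ?thesis unfolding Set_def M_def .
qed

end
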